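(* Let $p\in\mathbb{N}^*$ and $\gamma\geq1$. Let $V$ be a subset of a normed vector space and let $F:\mathbb{R}^p\to V$ be a homeomorphism which is Lip-$\gamma$. Endow $V$ with the $F$-induced atlas $(F(B_p(x,1)),\phi_x\circ F^{-1})_{x\in I}$. Then the inverses of the chart maps, i.e. the maps $(\phi_x\circ F^{-1}|_{F(B_p(x,1))})^{-1}:B_p(0,1)\to V$, $x\in I$, are Lip-$\gamma$ in the classical sense, with Lip-$\gamma$ norms bounded uniformly in $x\in I$.
   Context: Lip-$\gamma$ (Stein sense): for $m$ the integer with $0<\gamma-m\le1$, a map $g$ on an open set is Lip-$\gamma$ with norm $\le M$ if it is $m$ times differentiable, $\|D^kg(x)(v)\|\le M\|v\|$ and the Taylor remainders $R_k(x,y)$ defined by $D^kg(x)(v)=\sum_{j=k}^m D^jg(y)\big(\frac{v\otimes(x-y)^{\otimes(j-k)}}{(j-k)!}\big)+R_k(x,y)(v)$ satisfy $\|R_k(x,y)(v)\|\le M\|x-y\|^{\gamma-k}\|v\|$. Standard atlas on $\mathbb{R}^p$: let $(e_i)$ be the canonical basis, $I=\{\sum_{i=1}^p \frac{k_i}{\sqrt p}e_i:k_i\in\mathbb{Z}\}$, $\varphi:\mathbb{R}^p\to\mathbb{R}^p$ a Lip-$\gamma$ map equal to the identity on $B_p(0,1)$ with support in $B_p(0,2)$, and $\phi_x(y)=\varphi(y-x)$; the charts are $(B_p(x,1),\phi_x)_{x\in I}$. *)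

theory Defs
  imports "HOL-Analysis.Analysis"
begin

(* m = the integer with 0 < gamma - m <= 1 (for gamma > 0) *)
definition lip_order :: "real \<Rightarrow> nat" where
  "lip_order \<gamma> = nat (\<lceil>\<gamma>\<rceil> - 1)"

definition multilinear_list :: "nat \<Rightarrow> ('a::real_vector list \<Rightarrow> 'b::real_vector) \<Rightarrow> bool" where
  "multilinear_list k f \<longleftrightarrow>
     (\<forall>i<k. \<forall>vs. length vs = k \<longrightarrow> linear (\<lambda>h. f (vs[i := h])))"

(* Lip-gamma in the sense of Stein, with norm <= M, on the open set U.
   D k x is the k-th derivative of g at x, as a k-multilinear map. *)
definition Lip_gamma ::
  "real \<Rightarrow> real \<Rightarrow> 'a::real_normed_vector set \<Rightarrow> ('a \<Rightarrow> 'b::real_normed_vector) \<Rightarrow> bool" where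
  "Lip_gamma \<gamma> M U g \<longleftrightarrow> open U \<and>
    (\<exists>D :: nat \<Rightarrow> 'a \<Rightarrow> 'a list \<Rightarrow> 'b.
      (\<forall>x\<in>U. D 0 x [] = g x) \<and>
      (\<forall>k\<le>lip_order \<gamma>. \<forall>x\<in>U. multilinear_list k (D k x)) \<and>
      (\<forall>k<lip_order \<gamma>. \<forall>x\<in>U. \<forall>vs. length vs = k \<longrightarrow>
          ((\<lambda>y. D k y vs) has_derivative (\<lambda>h. D (Suc k) x (vs @ [h]))) (at x)) \<and>
      (\<forall>k\<le>lip_order \<gamma>. \<forall>x\<in>U. \<forall>vs. length vs = k \<longrightarrow>
          norm (D k x vs) \<le> M * prod_list (map norm vs)) \<and>
      (\<forall>k\<le>lip_order \<gamma>. \<forall>x\<in>U. \<forall>y\<in>U. \<forall>vs. length vs = k \<longrightarrow>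
          norm (D k x vs - (\<Sum>j=k..lip_order \<gamma>.
                   (1 / fact (j - k)) *\<^sub>R D j y (vs @ replicate (j - k) (x - y))))
            \<le> M * norm (x - y) powr (\<gamma> - real k) * prod_list (map norm vs)))"

definition std_index_set :: "'a::euclidean_space set" where
  "std_index_set = range (\<lambda>k::'a \<Rightarrow> int.
      \<Sum>i\<in>Basis. (of_int (k i) / sqrt (real DIM('a))) *\<^sub>R i)"

end

theory Submission
  imports Defs
begin

lemma lip_shift:
  fixes F :: "'a::real_normed_vector \<Rightarrow> 'b::real_normed_vector" and g :: "'a \<Rightarrow> 'b"
  assumes L: "Lip_gamma \<gamma> M UNIV F" and U: "open U"
    and g: "\<forall>w\<in>U. g w = F (w + c)"
  shows "Lip_gamma \<gamma> M U g"
proof -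
  from L obtain D :: "nat \<Rightarrow> 'a \<Rightarrow> 'a list \<Rightarrow> 'b" where
    d0: "\<forall>x\<in>UNIV. D 0 x [] = F x" and
    d1: "\<forall>k\<le>lip_order \<gamma>. \<forall>x\<in>UNIV. multilinear_list k (D k x)" and
    d2: "\<forall>k<lip_order \<gamma>. \<forall>x\<in>UNIV. \<forall>vs. length vs = k \<longrightarrow>
          ((\<lambda>y. D k y vs) has_derivative (\<lambda>h. D (Suc k) x (vs @ [h]))) (at x)" and
    d3: "\<forall>k\<le>lip_order \<gamma>. \<forall>x\<in>UNIV. \<forall>vs. length vs = k \<longrightarrow>
          norm (D k x vs) \<le> M * prod_list (map norm vs)" and
    d4: "\<forall>k\<le>lip_order \<gamma>. \<forall>x\<in>UNIV. \<forall>y\<in>UNIV. \<forall>vs. length vs = k \<longrightarrow>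
          norm (D k x vs - (\<Sum>j=k..lip_order \<gamma>.
                   (1 / fact (j - k)) *\<^sub>R D j y (vs @ replicate (j - k) (x - y))))
            \<le> M * norm (x - y) powr (\<gamma> - real k) * prod_list (map norm vs)"
    using L unfolding Lip_gamma_def
    apply (elim exE conjE)
    apply (rule that)
        apply assumption+
    done
  define D' where "D' = (\<lambda>k x. D k (x + c))"
  have e1: "\<forall>x\<in>U. D' 0 x [] = g x" using d0 g by (simp add: D'_def)
  have e2: "\<forall>k\<le>lip_order \<gamma>. \<forall>x\<in>U. multilinear_list k (D' k x)" using d1 by (simp add: D'_def)
  have e3: "\<forall>k<lip_order \<gamma>. \<forall>x\<in>U. \<forall>vs. length vs = k \<longrightarrow>
          ((\<lambda>y. D' k y vs) has_derivative (\<lambda>h. D' (Suc k) x (vs @ [h]))) (at x)"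
  proof (intro allI impI ballI)
    fix k x and vs :: "'a list" assume k: "k < lip_order \<gamma>" and "x \<in> U" and l: "length vs = (k::nat)"
    have a: "((\<lambda>y. D k y vs) has_derivative (\<lambda>h. D (Suc k) (x + c) (vs @ [h]))) (at (x + c))"
      using d2[rule_format, OF k UNIV_I l] .
    have b: "((\<lambda>y. y + c) has_derivative (\<lambda>h. h)) (at x)"
      by (auto intro!: derivative_eq_intros)
    have "((\<lambda>y. D k (y + c) vs) has_derivative ((\<lambda>h. D (Suc k) (x + c) (vs @ [h])) \<circ> (\<lambda>h. h))) (at x)"
      using diff_chain_at[OF b a] by (simp add: o_def)
    then show "((\<lambda>y. D' k y vs) has_derivative (\<lambda>h. D' (Suc k) x (vs @ [h]))) (at x)"
      by (simp add: D'_def o_def)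
  qed
  have e4: "\<forall>k\<le>lip_order \<gamma>. \<forall>x\<in>U. \<forall>vs. length vs = k \<longrightarrow>
          norm (D' k x vs) \<le> M * prod_list (map norm vs)" using d3 by (simp add: D'_def)
  have e5: "\<forall>k\<le>lip_order \<gamma>. \<forall>x\<in>U. \<forall>y\<in>U. \<forall>vs. length vs = k \<longrightarrow>
          norm (D' k x vs - (\<Sum>j=k..lip_order \<gamma>.
                   (1 / fact (j - k)) *\<^sub>R D' j y (vs @ replicate (j - k) (x - y))))
            \<le> M * norm (x - y) powr (\<gamma> - real k) * prod_list (map norm vs)"
  proof (intro allI impI ballI)
    fix k x y and vs :: "'a list" assume k: "k \<le> lip_order \<gamma>" and l: "length vs = (k::nat)"
    have "norm (D k (x + c) vs - (\<Sum>j=k..lip_order \<gamma>.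
                   (1 / fact (j - k)) *\<^sub>R D j (y + c) (vs @ replicate (j - k) ((x + c) - (y + c)))))
            \<le> M * norm ((x + c) - (y + c)) powr (\<gamma> - real k) * prod_list (map norm vs)"
      using d4[rule_format, OF k UNIV_I UNIV_I l] .
    then show "norm (D' k x vs - (\<Sum>j=k..lip_order \<gamma>.
                   (1 / fact (j - k)) *\<^sub>R D' j y (vs @ replicate (j - k) (x - y))))
            \<le> M * norm (x - y) powr (\<gamma> - real k) * prod_list (map norm vs)"
      by (simp add: D'_def)
  qed
  show ?thesis unfolding Lip_gamma_def
    by (intro conjI exI[of _ D'] U e1 e2 e3 e4 e5)
qed

theorem mainTheorem6:
  fixes F :: "'a::euclidean_space \<Rightarrow> 'b::real_normed_vector"
    and G :: "'b \<Rightarrow> 'a"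
    and V :: "'b set"
    and \<phi> :: "'a \<Rightarrow> 'a"
    and \<gamma> MF M\<phi> :: real
  assumes "\<gamma> \<ge> 1"
    and "homeomorphism UNIV V F G"
    and "Lip_gamma \<gamma> MF UNIV F"
    and "Lip_gamma \<gamma> M\<phi> UNIV \<phi>"
    and "\<forall>y\<in>ball 0 1. \<phi> y = y"
    and "closure {y. \<phi> y \<noteq> 0} \<subseteq> ball 0 2"
  shows "\<exists>M. \<forall>x\<in>(std_index_set :: 'a set).
           Lip_gamma \<gamma> M (ball 0 1) (inv_into (F ` ball x 1) (\<lambda>z. \<phi> (G z - x)))"
proof (intro exI ballI)
  fix x :: 'a
  have GF: "\<And>y. G (F y) = y" using assms(2) unfolding homeomorphism_def by auto
  have ph: "\<And>y. y \<in> ball x 1 \<Longrightarrow> \<phi> (y - x) = y - x"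
    using assms(5) by (simp add: dist_norm norm_minus_commute)
  have inj: "inj_on (\<lambda>z. \<phi> (G z - x)) (F ` ball x 1)"
    by (auto simp: inj_on_def GF ph)
  show "Lip_gamma \<gamma> MF (ball 0 1) (inv_into (F ` ball x 1) (\<lambda>z. \<phi> (G z - x)))"
  proof (rule lip_shift[OF assms(3) open_ball, where c = x], intro ballI)
    fix w :: 'a assume w: "w \<in> ball 0 1"
    have wx: "w + x \<in> ball x 1" using w by (simp add: dist_norm)
    have "(\<lambda>z. \<phi> (G z - x)) (F (w + x)) = w" using ph[OF wx] by (simp add: GF)
    then show "inv_into (F ` ball x 1) (\<lambda>z. \<phi> (G z - x)) w = F (w + x)"
      by (rule inv_into_f_eq[OF inj imageI[OF wx]])
  qed
qed

end
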